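(* Let $\theta\mapsto\mathcal E_\theta$ be a family of unital quantum channels on $d\times d$ matrices with Liouville representation $T_\theta$, and let $\theta_0$ be a parameter value. Suppose there exists a peripheral eigenvalue $\lambda_j$ of $T_\theta$ with $\dot\lambda_j\neq0$ whose associated eigenmatrix satisfies: either $\lim_{\theta\to\theta_0}R_j$ is Hermitian up to a multiplicative factor, or $\lim_{\theta\to\theta_0}\operatorname{Tr}(R_j^2)=0$. Then the sequential QFI of $N$ channels can achieve the Heisenberg limit at $\theta=\theta_0$: there exists an input state $\rho_0$ (independent of $N$) such that $\liminf_{N\to\infty}F^Q(\mathcal E_\theta^N(\rho_0))|_{\theta=\theta_0}/N^2>0$.
   Context: A quantum channel $\mathcal E_\theta(\rho)=\sum_iK_i^\theta\rho K_i^{\theta\dagger}$ (trace preserving) is unital if $\mathcal E_\theta(I)=I$. Its Liouville representation is $T_\theta=\sum_iK_i^\theta\otimes K_i^{\theta*}$, satisfying $T_\theta|\rho\rangle\rangle=|\mathcal E_\theta(\rho)\rangle\rangle$ with $|\rho\rangle\rangle=(\rho_{11},\rho_{12},\dots,\rho_{dd})^T$ and $\langle\langle A|B\rangle\rangle=\operatorname{Tr}(A^\dagger B)$. Peripheral eigenvalues of $T_\theta$ are those with modulus $1$; the eigenmatrix $R_j$ of an eigenvalue $\lambda_j$ is the matrix with $T_\theta|R_j\rangle\rangle=\lambda_j|R_j\rangle\rangle$. Eigenvalues and eigenmatrices are assumed continuously differentiable in $\theta$; a dot denotes $d/d\theta$. $F^Q(\rho_\theta)=\operatorname{Tr}(\rho_\theta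 L_{\rho_\theta}^2)$ is the quantum Fisher information with symmetric logarithmic derivative defined by $2\dot\rho_\theta=\rho_\theta L_{\rho_\theta}+L_{\rho_\theta}\rho_\theta$. No ancilla and no interleaved control are used. *)

theory Defs
  imports "HOL-Analysis.Analysis"
begin

text \<open>d x d complex matrices are modelled as complex^'n^'n with d = CARD('n).\<close>

definition adjoint_mat :: "complex^'n^'n \<Rightarrow> complex^'n^'n" where
  "adjoint_mat A = (\<chi> i j. cnj (A $ j $ i))"

definition smult_mat :: "complex \<Rightarrow> complex^'n^'n \<Rightarrow> complex^'n^'n" where
  "smult_mat c A = (\<chi> i j. c * A $ i $ j)"

definition hermitian_mat :: "complex^'n^'n \<Rightarrow> bool" where
  "hermitian_mat A \<longleftrightarrow> adjoint_mat A = A"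

definition psd_mat :: "complex^'n^'n \<Rightarrow> bool" where
  "psd_mat A \<longleftrightarrow> hermitian_mat A \<and>
     (\<forall>x::complex^'n. let q = (\<Sum>i\<in>UNIV. cnj (x $ i) * ((A *v x) $ i)) in Im q = 0 \<and> Re q \<ge> 0)"

definition density_matrix :: "complex^'n^'n \<Rightarrow> bool" where
  "density_matrix \<rho> \<longleftrightarrow> psd_mat \<rho> \<and> trace \<rho> = 1"

definition apply_channel :: "(nat \<Rightarrow> real \<Rightarrow> complex^'n^'n) \<Rightarrow> nat \<Rightarrow> real \<Rightarrow> complex^'n^'n \<Rightarrow> complex^'n^'n" where
  "apply_channel K m \<theta> \<rho> = (\<Sum>i<m. K i \<theta> ** \<rho> ** adjoint_mat (K i \<theta>))"

definition trace_preserving :: "(nat \<Rightarrow> real \<Rightarrow> complex^'n^'n) \<Rightarrow> nat \<Rightarrow> real \<Rightarrow> bool" where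
  "trace_preserving K m \<theta> \<longleftrightarrow> (\<Sum>i<m. adjoint_mat (K i \<theta>) ** K i \<theta>) = mat 1"

definition unital_channel :: "(nat \<Rightarrow> real \<Rightarrow> complex^'n^'n) \<Rightarrow> nat \<Rightarrow> real \<Rightarrow> bool" where
  "unital_channel K m \<theta> \<longleftrightarrow> apply_channel K m \<theta> (mat 1) = mat 1"

text \<open>Row-major vectorisation |rho>> = (rho_11, rho_12, ..., rho_dd), indexed by pairs.\<close>
definition vec_mat :: "complex^'n^'n \<Rightarrow> complex^('n \<times> 'n)" where
  "vec_mat \<rho> = (\<chi> p. \<rho> $ fst p $ snd p)"

text \<open>Liouville representation T = sum_i K_i (x) conj K_i.\<close>
definition liouville :: "(nat \<Rightarrow> real \<Rightarrow> complex^'n^'n) \<Rightarrow> nat \<Rightarrow> real \<Rightarrow> complex^('n \<times> 'n)^('n \<times> 'n)" where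
  "liouville K m \<theta> = (\<chi> p q. \<Sum>i<m. K i \<theta> $ fst p $ fst q * cnj (K i \<theta> $ snd p $ snd q))"

text \<open>QFI F^Q = Tr(rho L^2), L the (Hermitian) SLD: 2 rho' = rho L + L rho.\<close>
definition qfi :: "complex^'n^'n \<Rightarrow> complex^'n^'n \<Rightarrow> real" where
  "qfi \<rho> \<rho>' = (let L = (SOME L. hermitian_mat L \<and> 2 *\<^sub>R \<rho>' = \<rho> ** L + L ** \<rho>)
                 in Re (trace (\<rho> ** L ** L)))"

definition qfi_family :: "(real \<Rightarrow> complex^'n^'n) \<Rightarrow> real \<Rightarrow> real" where
  "qfi_family \<rho> \<theta>0 = qfi (\<rho> \<theta>0) (vector_derivative \<rho> (at \<theta>0))"

end

theory Submission
  imports Defs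
begin


lemma adj_nth[simp]: "adjoint_mat A $ i $ j = cnj (A $ j $ i)"
  by (simp add: adjoint_mat_def)
lemma smult_nth[simp]: "smult_mat c A $ i $ j = c * A $ i $ j"
  by (simp add: smult_mat_def)

lemma adj_adj[simp]: "adjoint_mat (adjoint_mat A) = A"
  by (simp add: vec_eq_iff)
lemma adj_add: "adjoint_mat (A + B) = adjoint_mat A + adjoint_mat B"
  by (simp add: vec_eq_iff)
lemma adj_diff: "adjoint_mat (A - B) = adjoint_mat A - adjoint_mat B"
  by (simp add: vec_eq_iff)
lemma adj_zero[simp]: "adjoint_mat 0 = 0"
  by (simp add: vec_eq_iff)
lemma adj_mult: "adjoint_mat (A ** B) = adjoint_mat B ** adjoint_mat A"
  by (simp add: vec_eq_iff matrix_matrix_mult_def mult.commute)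
lemma adj_smult: "adjoint_mat (smult_mat c A) = smult_mat (cnj c) (adjoint_mat A)"
  by (simp add: vec_eq_iff)
lemma adj_mat1[simp]: "adjoint_mat (mat 1) = mat 1"
  by (simp add: vec_eq_iff mat_def)
lemma adj_sum: "adjoint_mat (sum f S) = sum (\<lambda>i. adjoint_mat (f i)) S"
  by (induction S rule: infinite_finite_induct) (auto simp: adj_add)
lemma adj_scaleR: "adjoint_mat (r *\<^sub>R A) = r *\<^sub>R adjoint_mat A"
  by (simp add: vec_eq_iff)

lemma smult_add: "smult_mat c (A + B) = smult_mat c A + smult_mat c B"
  by (simp add: vec_eq_iff algebra_simps)
lemma smult_diff: "smult_mat c (A - B) = smult_mat c A - smult_mat c B"
  by (simp add: vec_eq_iff algebra_simps)
lemma smult_add_left: "smult_mat (a + b) A = smult_mat a A + smult_mat b A"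
  by (simp add: vec_eq_iff algebra_simps)
lemma smult_smult[simp]: "smult_mat a (smult_mat b A) = smult_mat (a * b) A"
  by (simp add: vec_eq_iff)
lemma smult_one[simp]: "smult_mat 1 A = A"
  by (simp add: vec_eq_iff)
lemma smult_zero[simp]: "smult_mat c 0 = 0" "smult_mat 0 A = 0"
  by (simp_all add: vec_eq_iff)
lemma smult_mult_left: "smult_mat c A ** B = smult_mat c (A ** B)"
  by (simp add: vec_eq_iff matrix_matrix_mult_def sum_distrib_left mult.assoc)
lemma smult_mult_right: "A ** smult_mat c B = smult_mat c (A ** B)"
  by (simp add: vec_eq_iff matrix_matrix_mult_def sum_distrib_left algebra_simps)
lemma smult_of_real: "smult_mat (of_real r) A = r *\<^sub>R A"
  by (auto simp: vec_eq_iff scaleR_conv_of_real[where 'a=complex])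
lemma smult_sum: "smult_mat c (sum f S) = sum (\<lambda>i. smult_mat c (f i)) S"
  by (induction S rule: infinite_finite_induct) (auto simp: smult_add)
lemma smult_uminus: "smult_mat c (- A) = - smult_mat c A"
  by (simp add: vec_eq_iff)

lemma norm_sq_mat: "(norm (A::complex^'n^'n))^2 = (\<Sum>i\<in>UNIV. \<Sum>j\<in>UNIV. (cmod (A$i$j))^2)"
  by (simp add: norm_vec_def L2_set_def sum_nonneg)

lemma norm_smult: "norm (smult_mat c A) = cmod c * norm A"
proof -
  have "(norm (smult_mat c A))^2 = (cmod c * norm A)^2"
    by (simp add: norm_sq_mat power_mult_distrib norm_mult sum_distrib_left)
  then show ?thesis by (simp add: power2_eq_iff_nonneg)
qed

lemma norm_adj: "norm (adjoint_mat A) = norm A"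
proof -
  have "(norm (adjoint_mat A))^2 = (norm A)^2"
    by (simp add: norm_sq_mat) (rule sum.swap)
  then show ?thesis by (simp add: power2_eq_iff_nonneg)
qed

lemma trace_adj_self: "trace (adjoint_mat A ** A) = of_real ((norm A)^2)"
proof -
  have "trace (adjoint_mat A ** A) = (\<Sum>i\<in>UNIV. \<Sum>k\<in>UNIV. A $ k $ i * cnj (A $ k $ i))"
    by (simp add: trace_def matrix_matrix_mult_def mult.commute)
  also have "\<dots> = (\<Sum>k\<in>UNIV. \<Sum>i\<in>UNIV. A $ k $ i * cnj (A $ k $ i))"
    by (rule sum.swap)
  also have "\<dots> = (\<Sum>k\<in>UNIV. \<Sum>i\<in>UNIV. of_real ((cmod (A $ k $ i))^2))"
    by (simp only: complex_norm_square)
  also have "\<dots> = of_real ((norm A)^2)"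
    by (simp only: norm_sq_mat of_real_sum)
  finally show ?thesis .
qed

lemma mm_add_left: "(A + B) ** (C::complex^'n^'n) = A ** C + B ** C"
  by (simp add: vec_eq_iff matrix_matrix_mult_def sum.distrib algebra_simps)
lemma mm_diff_left: "(A - B) ** (C::complex^'n^'n) = A ** C - B ** C"
  by (simp add: vec_eq_iff matrix_matrix_mult_def sum_subtractf algebra_simps)
lemma mm_diff_right: "(C::complex^'n^'n) ** (A - B) = C ** A - C ** B"
  by (simp add: vec_eq_iff matrix_matrix_mult_def sum_subtractf algebra_simps)
lemma mm_sum_left: "sum f S ** (C::complex^'n^'n) = sum (\<lambda>i. f i ** C) S"
  by (induction S rule: infinite_finite_induct) (auto simp: mm_add_left)
lemma mm_sum_right: "(C::complex^'n^'n) ** sum f S = sum (\<lambda>i. C ** f i) S"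
  by (induction S rule: infinite_finite_induct) (auto simp: matrix_add_ldistrib)

lemma mm_bilinear: "bilinear (\<lambda>(A::complex^'n^'n) (B::complex^'n^'n). A ** B)"
  by (simp add: bilinear_def linear_iff mm_add_left matrix_add_ldistrib
      scalar_matrix_assoc[symmetric] matrix_scalar_ac)

lemma mm_bounded_bilinear: "bounded_bilinear (\<lambda>(A::complex^'n^'n) (B::complex^'n^'n). A ** B)"
  using mm_bilinear bilinear_conv_bounded_bilinear by blast

lemma mm_bound: "\<exists>Km>0. \<forall>(A::complex^'n^'n) (B::complex^'n^'n). norm (A ** B) \<le> Km * norm A * norm B"
proof -
  obtain B where "B > 0" "\<forall>(x::complex^'n^'n) (y::complex^'n^'n). norm (x ** y) \<le> B * norm x * norm y"
    using bilinear_bounded_pos[OF mm_bilinear] by auto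
  then show ?thesis by (intro exI[of _ B]) auto
qed

lemma trace_linear: "linear (trace :: complex^'n^'n \<Rightarrow> complex)"
  by (simp add: linear_iff trace_add) (simp add: trace_def scaleR_sum_right)

lemma trace_bound: "\<exists>Kt>0. \<forall>A::complex^'n^'n. cmod (trace A) \<le> Kt * norm A"
  using linear_bounded_pos[OF trace_linear] by metis

definition cdot :: "complex^'n \<Rightarrow> complex^'n \<Rightarrow> complex" where
  "cdot x y = (\<Sum>i\<in>UNIV. cnj (x$i) * y$i)"

lemma cdot_bilinear: "bilinear (cdot :: complex^'n \<Rightarrow> complex^'n \<Rightarrow> complex)"
  by (simp add: bilinear_def linear_iff cdot_def sum.distrib algebra_simps scaleR_sum_right
     sum_distrib_left scaleR_conv_of_real[where 'a=complex])

lemma cdot_bound: "\<exists>Kc>0. \<forall>(x::complex^'n) (y::complex^'n). cmod (cdot x y) \<le> Kc * norm x * norm y"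
proof -
  obtain B where "B > 0" "\<forall>(x::complex^'n) (y::complex^'n). cmod (cdot x y) \<le> B * norm x * norm y"
    using bilinear_bounded_pos[OF cdot_bilinear] by auto
  then show ?thesis by (intro exI[of _ B]) auto
qed

lemma mv_bilinear: "bilinear (\<lambda>(A::complex^'n^'n) (x::complex^'n). A *v x)"
  by (simp add: bilinear_def linear_iff matrix_vector_mult_add_rdistrib matrix_vector_right_distrib)
     (simp add: vec_eq_iff matrix_vector_mult_def scaleR_sum_right)

lemma mv_bound: "\<exists>Kv>0. \<forall>(A::complex^'n^'n) (x::complex^'n). norm (A *v x) \<le> Kv * norm A * norm x"
proof -
  obtain B where "B > 0" "\<forall>(x::complex^'n^'n) (y::complex^'n). norm (x *v y) \<le> B * norm x * norm y"
    using bilinear_bounded_pos[OF mv_bilinear] by auto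
  then show ?thesis by (intro exI[of _ B]) auto
qed

lemma adj_linear: "bounded_linear (adjoint_mat :: complex^'n^'n \<Rightarrow> _)"
  by (rule linear_conv_bounded_linear[THEN iffD1]) (simp add: linear_iff adj_add adj_scaleR)

section \<open>Channel algebra\<close>

lemma P_add: "apply_channel K m t (A + B) = apply_channel K m t A + apply_channel K m t B"
  by (simp add: apply_channel_def matrix_add_ldistrib mm_add_left sum.distrib)
lemma P_diff: "apply_channel K m t (A - B) = apply_channel K m t A - apply_channel K m t B"
  by (simp add: apply_channel_def mm_diff_right mm_diff_left sum_subtractf)
lemma P_smult: "apply_channel K m t (smult_mat c A) = smult_mat c (apply_channel K m t A)"
  by (simp add: apply_channel_def smult_mult_left smult_mult_right smult_sum)
lemma P_zero[simp]: "apply_channel K m t 0 = 0"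
  by (simp add: apply_channel_def)
lemma P_adj: "apply_channel K m t (adjoint_mat A) = adjoint_mat (apply_channel K m t A)"
  by (simp add: apply_channel_def adj_sum adj_mult matrix_mul_assoc)

lemma Pn_add: "(apply_channel K m t ^^ N) (A + B) = (apply_channel K m t ^^ N) A + (apply_channel K m t ^^ N) B"
  by (induction N) (auto simp: P_add)
lemma Pn_diff: "(apply_channel K m t ^^ N) (A - B) = (apply_channel K m t ^^ N) A - (apply_channel K m t ^^ N) B"
  by (induction N) (auto simp: P_diff)
lemma Pn_smult: "(apply_channel K m t ^^ N) (smult_mat c A) = smult_mat c ((apply_channel K m t ^^ N) A)"
  by (induction N) (auto simp: P_smult)
lemma Pn_adj: "(apply_channel K m t ^^ N) (adjoint_mat A) = adjoint_mat ((apply_channel K m t ^^ N) A)"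
  by (induction N) (auto simp: P_adj)
lemma Pn_unital: "unital_channel K m t \<Longrightarrow> (apply_channel K m t ^^ N) (mat 1) = mat 1"
  by (induction N) (auto simp: unital_channel_def)

section \<open>Sesquilinear form\<close>

lemma cdot_adj: "cdot x (A *v y) = cdot (adjoint_mat A *v x) y"
  by (simp add: cdot_def matrix_vector_mult_def sum_distrib_left sum_distrib_right mult_ac)
     (rule sum.swap)
lemma cdot_add_right: "cdot x (y + z) = cdot x y + cdot x z"
  by (simp add: cdot_def sum.distrib algebra_simps)
lemma cdot_add_left: "cdot (x + y) z = cdot x z + cdot y z"
  by (simp add: cdot_def sum.distrib algebra_simps)
lemma cdot_diff_right: "cdot x (y - z) = cdot x y - cdot x z"
  by (simp add: cdot_def sum_subtractf algebra_simps)
lemma cdot_diff_left: "cdot (x - y) z = cdot x z - cdot y z"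
  by (simp add: cdot_def sum_subtractf algebra_simps)
lemma cdot_smult_right: "cdot x (c *s y) = c * cdot x y"
  by (simp add: cdot_def sum_distrib_left algebra_simps)
lemma cdot_smult_left: "cdot (c *s x) y = cnj c * cdot x y"
  by (simp add: cdot_def sum_distrib_left algebra_simps)
lemma cdot_sum_right: "cdot x (sum f S) = (\<Sum>i\<in>S. cdot x (f i))"
  apply (induction S rule: infinite_finite_induct)
    apply (simp add: cdot_def)
   apply (simp add: cdot_def)
  apply (simp add: cdot_add_right)
  done
lemma cdot_self: "cdot x x = of_real ((norm x)^2)"
proof -
  have "cdot x x = (\<Sum>i\<in>UNIV. of_real ((cmod (x$i))^2))"
    by (simp only: cdot_def complex_norm_square mult.commute)
  also have "\<dots> = of_real ((norm x)^2)"
    by (simp only: of_real_sum norm_vec_def L2_set_def) (simp add: sum_nonneg)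
  finally show ?thesis .
qed

lemma mv_sum_left: "sum f S *v (x::complex^'n) = (\<Sum>i\<in>S. f i *v x)"
  by (induction S rule: infinite_finite_induct) (auto simp: matrix_vector_mult_add_rdistrib)

lemma cdot_P: "cdot x (apply_channel K m t X *v y) =
   (\<Sum>i<m. cdot (adjoint_mat (K i t) *v x) (X *v (adjoint_mat (K i t) *v y)))"
  by (simp add: apply_channel_def mv_sum_left cdot_sum_right
      flip: matrix_vector_mul_assoc cdot_adj)

lemma unital_norm: assumes "unital_channel K m t"
  shows "(\<Sum>i<m. (norm (adjoint_mat (K i t) *v x))^2) = (norm x)^2"
proof -
  have "cdot x (apply_channel K m t (mat 1) *v x) = cdot x x"
    using assms by (simp add: unital_channel_def)
  then have "(\<Sum>i<m. cdot (adjoint_mat (K i t) *v x) (adjoint_mat (K i t) *v x)) = cdot x x"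
    by (simp add: cdot_P)
  then have "of_real (\<Sum>i<m. (norm (adjoint_mat (K i t) *v x))^2) = (of_real ((norm x)^2) :: complex)"
    by (simp add: cdot_self)
  then show ?thesis using of_real_eq_iff by blast
qed

definition fb :: "complex^'n^'n \<Rightarrow> real \<Rightarrow> bool" where
  "fb H c \<longleftrightarrow> hermitian_mat H \<and> (\<forall>x. cmod (cdot x (H *v x)) \<le> c * (norm x)^2)"

lemma hermitian_P: "hermitian_mat H \<Longrightarrow> hermitian_mat (apply_channel K m t H)"
  by (simp add: hermitian_mat_def flip: P_adj)

lemma fb_P: assumes "unital_channel K m t" "fb H c"
  shows "fb (apply_channel K m t H) c"
  unfolding fb_def
proof (intro conjI allI)
  show "hermitian_mat (apply_channel K m t H)" using assms(2) hermitian_P fb_def by blast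
  fix x
  have "cmod (cdot x (apply_channel K m t H *v x))
     \<le> (\<Sum>i<m. cmod (cdot (adjoint_mat (K i t) *v x) (H *v (adjoint_mat (K i t) *v x))))"
    unfolding cdot_P by (rule norm_sum)
  also have "\<dots> \<le> (\<Sum>i<m. c * (norm (adjoint_mat (K i t) *v x))^2)"
    by (rule sum_mono) (use assms(2) in \<open>simp add: fb_def\<close>)
  also have "\<dots> = c * (norm x)^2"
    by (simp add: unital_norm[OF assms(1)] flip: sum_distrib_left)
  finally show "cmod (cdot x (apply_channel K m t H *v x)) \<le> c * (norm x)^2" .
qed

lemma fb_Pn: assumes "unital_channel K m t" "fb H c"
  shows "fb ((apply_channel K m t ^^ N) H) c"
  by (induction N) (auto simp: assms fb_P)

lemma mv_smult_vec: "A *v (c *s (y::complex^'n)) = c *s (A *v y)"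
  by (simp add: vec_eq_iff matrix_vector_mult_def sum_distrib_left mult_ac)

lemma norm_smult_vec: "norm (c *s (y::complex^'n)) = cmod c * norm y"
proof -
  have "(norm (c *s y))^2 = (cmod c * norm y)^2"
    by (simp add: norm_vec_def L2_set_def sum_nonneg power_mult_distrib norm_mult sum_distrib_left)
  then show ?thesis by (simp add: power2_eq_iff_nonneg)
qed

lemma parallelogram: "(norm (x + y))^2 + (norm (x - y))^2 = 2 * (norm (x::'a::real_inner))^2 + 2 * (norm y)^2"
  by (simp add: power2_norm_eq_inner inner_add inner_diff inner_commute)

lemma polar: "cdot x (A *v y) = (1/4) * (cdot (x+y) (A *v (x+y)) - cdot (x-y) (A *v (x-y)))
   - (\<i>/4) * (cdot (x + \<i> *s y) (A *v (x + \<i> *s y)) - cdot (x - \<i> *s y) (A *v (x - \<i> *s y)))"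
  by (simp add: matrix_vector_right_distrib matrix_vector_mult_diff_distrib mv_smult_vec
      cdot_add_left cdot_add_right cdot_diff_left cdot_diff_right cdot_smult_left cdot_smult_right
      algebra_simps)

lemma arith4: "(1/4)*(c*a + c*b) + (1/4)*(c*e + c*f) = (c/4)*((a+b)+(e+f)::real)"
  by (simp add: algebra_simps)

lemma fb_polar: assumes "fb A c"
  shows "cmod (cdot x (A *v y)) \<le> c * ((norm x)^2 + (norm y)^2)"
proof -
  have q: "cmod (cdot u (A *v u)) \<le> c * (norm u)^2" for u using assms fb_def by blast
  have "cmod (cdot x (A *v y)) \<le> (1/4) * (cmod (cdot (x+y) (A *v (x+y))) + cmod (cdot (x-y) (A *v (x-y))))
     + (1/4) * (cmod (cdot (x + \<i> *s y) (A *v (x + \<i> *s y))) + cmod (cdot (x - \<i> *s y) (A *v (x - \<i> *s y))))"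
    apply (subst polar)
    apply (rule order_trans[OF norm_triangle_ineq4])
    apply (simp add: norm_mult)
    apply (intro add_mono divide_right_mono norm_triangle_ineq4; simp)
    done
  also have "\<dots> \<le> (1/4) * (c * (norm (x+y))^2 + c * (norm (x-y))^2)
     + (1/4) * (c * (norm (x + \<i> *s y))^2 + c * (norm (x - \<i> *s y))^2)"
    by (intro add_mono mult_left_mono q) auto
  also have "\<dots> = (c/4) * (((norm (x+y))^2 + (norm (x-y))^2) + ((norm (x + \<i> *s y))^2 + (norm (x - \<i> *s y))^2))"
    by (rule arith4)
  also have "\<dots> = c * ((norm x)^2 + (norm y)^2)"
  proof -
    have p1: "(norm (x+y))^2 + (norm (x-y))^2 = 2 * (norm x)^2 + 2 * (norm y)^2" by (rule parallelogram)
    have p2: "(norm (x + \<i> *s y))^2 + (norm (x - \<i> *s y))^2 = 2 * (norm x)^2 + 2 * (norm y)^2"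
      using parallelogram[of x "\<i> *s y"] by (simp add: norm_smult_vec)
    show ?thesis by (simp only: p1 p2) (simp add: algebra_simps)
  qed
  finally show ?thesis .
qed

lemma entry_cdot: fixes A :: "complex^'n^'n" shows "A $ i $ j = cdot (axis i 1) (A *v axis j (1::complex))"
proof -
  have "A *v axis j (1::complex) = (\<chi> k. A $ k $ j)"
    by (simp add: vec_eq_iff matrix_vector_mult_def axis_def if_distrib[where f="\<lambda>x. _ * x"] cong: if_cong)
  moreover have "cdot (axis i 1) v = v $ i" for v :: "complex^'n"
    by (simp add: cdot_def axis_def if_distrib[where f="\<lambda>x. cnj x * _"] cong: if_cong)
  ultimately show ?thesis by simp
qed

lemma norm_axis_c[simp]: "norm (axis i (1::complex) :: complex^'n) = 1"
proof -
  have "(\<Sum>k\<in>UNIV. (norm (axis i (1::complex) $ k))^2) = (\<Sum>k\<in>UNIV. if k = i then 1 else (0::real))"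
    by (rule sum.cong) (auto simp: axis_def)
  then show ?thesis by (simp add: norm_vec_def L2_set_def)
qed

lemma fb_norm: fixes A :: "complex^'n^'n" assumes "fb A c" shows "norm A \<le> 2 * c * real CARD('n)"
proof -
  have e: "cmod (A $ i $ j) \<le> 2 * c" for i j
    using fb_polar[OF assms, of "axis i 1" "axis j 1"] unfolding entry_cdot[symmetric] norm_axis_c by simp
  have c0: "c \<ge> 0" using e[of undefined undefined] norm_ge_zero[of "A $ undefined $ undefined"] by linarith
  have "(norm A)^2 \<le> (\<Sum>i\<in>(UNIV::'n set). \<Sum>j\<in>(UNIV::'n set). (2*c)^2)"
    unfolding norm_sq_mat
    apply (rule sum_mono)+
    apply (rule power_mono[OF e])
    apply simp
    done
  also have "\<dots> = (2 * c * real CARD('n))^2"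
    by (simp add: power_mult_distrib power2_eq_square)
  finally have "(norm A)^2 \<le> (2 * c * real CARD('n))^2" .
  then show ?thesis using c0 power2_le_imp_le[of "norm A" "2 * c * real CARD('n)"] by simp
qed

lemma fb_init: "\<exists>c. \<forall>H::complex^'n^'n. hermitian_mat H \<longrightarrow> fb H (c * norm H)"
proof -
  obtain Kc where Kc: "\<forall>(x::complex^'n) (y::complex^'n). cmod (cdot x y) \<le> Kc * norm x * norm y"
    using cdot_bound by blast
  obtain Kv where Kv: "Kv > 0" "\<forall>(A::complex^'n^'n) (x::complex^'n). norm (A *v x) \<le> Kv * norm A * norm x"
    using mv_bound by blast
  have Kc0: "Kc \<ge> 0" using Kc[rule_format, of "axis undefined 1" "axis undefined 1"]
    by (simp add: cdot_self)
  show ?thesis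
  proof (intro exI[of _ "Kc * Kv"] allI impI)
    fix H :: "complex^'n^'n" assume "hermitian_mat H"
    show "fb H (Kc * Kv * norm H)" unfolding fb_def
    proof (intro conjI allI)
      fix x
      have "cmod (cdot x (H *v x)) \<le> Kc * norm x * norm (H *v x)" using Kc by blast
      also have "\<dots> \<le> Kc * norm x * (Kv * norm H * norm x)"
        using Kv Kc0 by (intro mult_left_mono) auto
      finally show "cmod (cdot x (H *v x)) \<le> Kc * Kv * norm H * (norm x)^2"
        by (simp add: power2_eq_square mult_ac)
    qed fact
  qed
qed

lemma Pn_bounded: fixes X :: "complex^'n^'n" assumes "unital_channel K m t"
  shows "\<exists>C. \<forall>N. norm ((apply_channel K m t ^^ N) X) \<le> C"
proof -
  obtain c where c: "\<forall>H::complex^'n^'n. hermitian_mat H \<longrightarrow> fb H (c * norm H)" using fb_init by blast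
  define H1 where "H1 = smult_mat (1/2) (X + adjoint_mat X)"
  define H2 where "H2 = smult_mat (-\<i>/2) (X - adjoint_mat X)"
  have h1: "hermitian_mat H1" unfolding hermitian_mat_def H1_def
    by (simp add: vec_eq_iff)
  have h2: "hermitian_mat H2" unfolding hermitian_mat_def H2_def
    by (simp add: vec_eq_iff algebra_simps)
  have X: "X = H1 + smult_mat \<i> H2"
    by (simp add: H1_def H2_def vec_eq_iff algebra_simps)
  show ?thesis
  proof (intro exI allI)
    fix N
    have "norm ((apply_channel K m t ^^ N) X) \<le> norm ((apply_channel K m t ^^ N) H1) + norm ((apply_channel K m t ^^ N) H2)"
      apply (subst X)
      apply (simp add: Pn_add Pn_smult)
      apply (rule order_trans[OF norm_triangle_ineq])
      apply (simp add: norm_smult)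
      done
    also have "\<dots> \<le> 2 * (c * norm H1) * real CARD('n) + 2 * (c * norm H2) * real CARD('n)"
      using c h1 h2 by (intro add_mono fb_norm fb_Pn[OF assms]) auto
    finally show "norm ((apply_channel K m t ^^ N) X) \<le> 2 * (c * norm H1) * real CARD('n) + 2 * (c * norm H2) * real CARD('n)" .
  qed
qed


section \<open>Derivatives\<close>

definition Pd :: "(nat \<Rightarrow> real \<Rightarrow> complex^'n^'n) \<Rightarrow> (nat \<Rightarrow> complex^'n^'n) \<Rightarrow> nat \<Rightarrow> real \<Rightarrow> complex^'n^'n \<Rightarrow> complex^'n^'n" where
  "Pd K K' m t X = (\<Sum>i<m. K' i ** X ** adjoint_mat (K i t) + K i t ** X ** adjoint_mat (K' i))"

lemma Pd_add: "Pd K K' m t (A + B) = Pd K K' m t A + Pd K K' m t B"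
  by (simp add: Pd_def matrix_add_ldistrib mm_add_left sum.distrib algebra_simps)
lemma Pd_diff: "Pd K K' m t (A - B) = Pd K K' m t A - Pd K K' m t B"
  by (simp add: Pd_def mm_diff_right mm_diff_left sum_subtractf algebra_simps)
lemma Pd_smult: "Pd K K' m t (smult_mat c A) = smult_mat c (Pd K K' m t A)"
  by (simp add: Pd_def smult_mult_left smult_mult_right smult_sum smult_add)

lemma P_deriv:
  assumes K: "\<forall>i<m. (K i has_vector_derivative K' i) (at t)"
    and f: "(f has_vector_derivative f') (at t)"
  shows "((\<lambda>s. apply_channel K m s (f s)) has_vector_derivative
           (apply_channel K m t f' + Pd K K' m t (f t))) (at t)"
proof -
  have "((\<lambda>s. K i s ** f s ** adjoint_mat (K i s)) has_vector_derivative
      (K' i ** f t ** adjoint_mat (K i t) + K i t ** f' ** adjoint_mat (K i t) + K i t ** f t ** adjoint_mat (K' i))) (at t)"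
    if i: "i < m" for i
  proof -
    have Ki: "(K i has_vector_derivative K' i) (at t)" using K i by blast
    have a: "((\<lambda>s. adjoint_mat (K i s)) has_vector_derivative adjoint_mat (K' i)) (at t)"
      using bounded_linear.has_vector_derivative[OF adj_linear Ki] .
    have b: "((\<lambda>s. K i s ** f s) has_vector_derivative (K i t ** f' + K' i ** f t)) (at t)"
      using bounded_bilinear.has_vector_derivative[OF mm_bounded_bilinear Ki f] by simp
    have "((\<lambda>s. K i s ** f s ** adjoint_mat (K i s)) has_vector_derivative
      ((K i t ** f t) ** adjoint_mat (K' i) + (K i t ** f' + K' i ** f t) ** adjoint_mat (K i t))) (at t)"
      using bounded_bilinear.has_vector_derivative[OF mm_bounded_bilinear b a] by simp
    then show ?thesis by (simp add: mm_add_left algebra_simps)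
  qed
  then have "((\<lambda>s. \<Sum>i<m. K i s ** f s ** adjoint_mat (K i s)) has_vector_derivative
      (\<Sum>i<m. K' i ** f t ** adjoint_mat (K i t) + K i t ** f' ** adjoint_mat (K i t) + K i t ** f t ** adjoint_mat (K' i))) (at t)"
    by (intro has_vector_derivative_sum) auto
  then show ?thesis
    by (simp add: apply_channel_def Pd_def sum.distrib algebra_simps)
qed

lemma smult_bounded_bilinear: "bounded_bilinear (\<lambda>(c::complex) (A::complex^'n^'n). smult_mat c A)"
proof -
  have "bilinear (\<lambda>(c::complex) (A::complex^'n^'n). smult_mat c A)"
    by (simp add: bilinear_def linear_iff smult_add smult_add_left)
       (auto simp: vec_eq_iff scaleR_conv_of_real[where 'a=complex] algebra_simps)
  then show ?thesis using bilinear_conv_bounded_bilinear by blast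
qed

lemma smult_deriv:
  assumes "(c has_vector_derivative c') (at t)" "(f has_vector_derivative f') (at t)"
  shows "((\<lambda>s. smult_mat (c s) (f s)) has_vector_derivative (smult_mat (c t) f' + smult_mat c' (f t))) (at t)"
  using bounded_bilinear.has_vector_derivative[OF smult_bounded_bilinear assms] by simp

lemma adj_deriv:
  assumes "(f has_vector_derivative f') (at t)"
  shows "((\<lambda>s. adjoint_mat (f s)) has_vector_derivative adjoint_mat f') (at t)"
  using bounded_linear.has_vector_derivative[OF adj_linear assms] .

section \<open>Liouville\<close>

lemma liouville_vec: "liouville K m t *v vec_mat X = vec_mat (apply_channel K m t X)"
proof -
  have "(liouville K m t *v vec_mat X) $ (a, b) = vec_mat (apply_channel K m t X) $ (a, b)" for a b
  proof -
    have "(liouville K m t *v vec_mat X) $ (a, b) =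
      (\<Sum>q\<in>UNIV. (\<Sum>i<m. K i t $ a $ fst q * cnj (K i t $ b $ snd q)) * X $ fst q $ snd q)"
      by (simp add: matrix_vector_mult_def liouville_def vec_mat_def)
    also have "\<dots> = (\<Sum>q\<in>UNIV \<times> UNIV. (\<Sum>i<m. K i t $ a $ fst q * cnj (K i t $ b $ snd q)) * X $ fst q $ snd q)"
      by simp
    also have "\<dots> = (\<Sum>l\<in>UNIV. \<Sum>k\<in>UNIV. (\<Sum>i<m. K i t $ a $ l * cnj (K i t $ b $ k)) * X $ l $ k)"
      by (simp add: sum.cartesian_product split_def)
    also have "\<dots> = (\<Sum>l\<in>UNIV. \<Sum>k\<in>UNIV. \<Sum>i<m. K i t $ a $ l * X $ l $ k * cnj (K i t $ b $ k))"
      by (simp add: sum_distrib_right sum_distrib_left mult_ac)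
    also have "\<dots> = (\<Sum>k\<in>UNIV. \<Sum>l\<in>UNIV. \<Sum>i<m. K i t $ a $ l * X $ l $ k * cnj (K i t $ b $ k))"
      by (rule sum.swap)
    also have "\<dots> = (\<Sum>k\<in>UNIV. \<Sum>i<m. \<Sum>l\<in>UNIV. K i t $ a $ l * X $ l $ k * cnj (K i t $ b $ k))"
      by (rule sum.cong[OF refl], rule sum.swap)
    also have "\<dots> = (\<Sum>i<m. \<Sum>k\<in>UNIV. \<Sum>l\<in>UNIV. K i t $ a $ l * X $ l $ k * cnj (K i t $ b $ k))"
      by (rule sum.swap)
    also have "\<dots> = vec_mat (apply_channel K m t X) $ (a, b)"
      by (simp add: vec_mat_def apply_channel_def matrix_matrix_mult_def sum_component sum_distrib_right)
    finally show ?thesis .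
  qed
  then show ?thesis by (simp add: vec_eq_iff)
qed

lemma vec_mat_smult: "vec_mat (smult_mat c X) = c *s vec_mat X"
  by (simp add: vec_eq_iff vec_mat_def)

lemma vec_mat_inj: "vec_mat A = vec_mat B \<Longrightarrow> A = B"
  by (simp add: vec_eq_iff vec_mat_def)

lemma eig_P: assumes "liouville K m t *v vec_mat X = c *s vec_mat X" shows "apply_channel K m t X = smult_mat c X"
proof -
  have "vec_mat (apply_channel K m t X) = vec_mat (smult_mat c X)"
    using assms by (simp add: liouville_vec vec_mat_smult)
  then show ?thesis by (rule vec_mat_inj)
qed


section \<open>QFI bound\<close>

lemma trace_smult: "trace (smult_mat c A) = c * trace A"
  by (simp add: trace_def sum_distrib_left)

lemma herm_trace_sq: "hermitian_mat L \<Longrightarrow> trace (L ** L) = of_real ((norm L)^2)"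
  using trace_adj_self[of L] by (simp add: hermitian_mat_def)

lemma rho_mult:
  fixes Y L :: "complex^'n^'n"
  shows "(smult_mat a (mat 1) + smult_mat e Y) ** L + L ** (smult_mat a (mat 1) + smult_mat e Y)
     = smult_mat (2 * a) L + smult_mat e (Y ** L + L ** Y)"
  by (simp add: mm_add_left matrix_add_ldistrib smult_mult_left smult_mult_right smult_add)
     (simp add: vec_eq_iff algebra_simps)

lemma kconsts: "\<exists>Km Kt. Km > 0 \<and> Kt > 0 \<and> (\<forall>(A::complex^'n^'n) (B::complex^'n^'n). norm (A ** B) \<le> Km * norm A * norm B)
   \<and> (\<forall>A::complex^'n^'n. cmod (trace A) \<le> Kt * norm A)"
  using mm_bound trace_bound by blast

lemma tb3:
  fixes A B C :: "complex^'n^'n"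
  assumes "Km > 0" "\<forall>(A::complex^'n^'n) (B::complex^'n^'n). norm (A ** B) \<le> Km * norm A * norm B"
    "\<forall>A::complex^'n^'n. cmod (trace A) \<le> Kt * norm A" "Kt > 0"
  shows "cmod (trace (A ** B ** C)) \<le> Kt * Km^2 * norm A * norm B * norm C"
proof -
  have "cmod (trace (A ** B ** C)) \<le> Kt * norm (A ** B ** C)" using assms by blast
  also have "\<dots> \<le> Kt * (Km * norm (A ** B) * norm C)"
    using assms by (intro mult_left_mono) auto
  also have "\<dots> \<le> Kt * (Km * (Km * norm A * norm B) * norm C)"
    using assms by (intro mult_left_mono mult_right_mono) auto
  finally show ?thesis by (simp add: power2_eq_square mult_ac)
qed

lemma qfi_bound_L:
  fixes Y L rho' :: "complex^'n^'n" and e a :: real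
  assumes Km: "Km > 0" "\<forall>(A::complex^'n^'n) (B::complex^'n^'n). norm (A ** B) \<le> Km * norm A * norm B"
    and Kt: "\<forall>A::complex^'n^'n. cmod (trace A) \<le> Kt * norm A" "Kt > 0"
    and hL: "hermitian_mat L" and a: "a > 0" and e: "e \<ge> 0"
    and small1: "e * Kt * Km^2 * norm Y \<le> a / 4" and small2: "e * Km * norm Y \<le> a / 4"
    and eq: "2 *\<^sub>R rho' = (smult_mat a (mat 1) + smult_mat e Y) ** L + L ** (smult_mat a (mat 1) + smult_mat e Y)"
  shows "(norm rho')^2 / (8 * a) \<le> Re (trace ((smult_mat a (mat 1) + smult_mat e Y) ** L ** L))"
proof -
  have tr: "trace ((smult_mat a (mat 1) + smult_mat e Y) ** L ** L) = of_real (a * (norm L)^2) + e * trace (Y ** L ** L)"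
    using herm_trace_sq[OF hL]
    by (simp add: mm_add_left smult_mult_left trace_add trace_smult matrix_mul_assoc)
  have "cmod (trace (Y ** L ** L)) \<le> Kt * Km^2 * norm Y * norm L * norm L"
    by (rule tb3[OF Km Kt(1) Kt(2)])
  then have "Re (e * trace (Y ** L ** L)) \<ge> - (e * Kt * Km^2 * norm Y * (norm L)^2)"
  proof -
    assume c: "cmod (trace (Y ** L ** L)) \<le> Kt * Km^2 * norm Y * norm L * norm L"
    have "e * cmod (trace (Y ** L ** L)) \<le> e * (Kt * Km^2 * norm Y * norm L * norm L)"
      using c e by (rule mult_left_mono)
    moreover have "\<bar>Re (e * trace (Y ** L ** L))\<bar> \<le> e * cmod (trace (Y ** L ** L))"
      using abs_Re_le_cmod[of "e * trace (Y ** L ** L)"] e by (simp add: norm_mult)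
    ultimately show ?thesis by (simp add: power2_eq_square mult_ac)
  qed
  moreover have "e * Kt * Km^2 * norm Y * (norm L)^2 \<le> a/4 * (norm L)^2"
    using small1 by (intro mult_right_mono) auto
  ultimately have lb: "Re (trace ((smult_mat a (mat 1) + smult_mat e Y) ** L ** L)) \<ge> (3*a/4) * (norm L)^2"
    unfolding tr by simp
  have "2 *\<^sub>R rho' = smult_mat (2 * a) L + smult_mat e (Y ** L + L ** Y)"
    using eq rho_mult[of "of_real a" "of_real e" Y L] by simp
  then have "2 * norm rho' \<le> norm (smult_mat (2 * a) L) + norm (smult_mat e (Y ** L + L ** Y))"
    by (metis norm_scaleR norm_triangle_ineq abs_numeral)
  also have "\<dots> \<le> 2 * a * norm L + e * (norm (Y ** L) + norm (L ** Y))"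
    using a e by (auto simp: norm_smult intro!: mult_left_mono norm_triangle_ineq)
  also have "\<dots> \<le> 2 * a * norm L + e * (2 * Km * norm Y * norm L)"
  proof -
    have "norm (Y ** L) + norm (L ** Y) \<le> 2 * Km * norm Y * norm L"
      using Km(2)[rule_format, of Y L] Km(2)[rule_format, of L Y] by (simp add: mult_ac)
    then show ?thesis using e by (intro add_left_mono mult_left_mono) auto
  qed
  also have "\<dots> \<le> 2 * a * norm L + 2 * (a/4) * norm L"
  proof -
    have "(e * Km * norm Y) * norm L \<le> (a/4) * norm L" using small2 by (rule mult_right_mono) simp
    then show ?thesis by (simp add: mult_ac)
  qed
  finally have "norm rho' \<le> (5*a/4) * norm L" by simp
  then have "(norm rho')^2 \<le> ((5*a/4) * norm L)^2" by (simp add: power_mono)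
  then have "(norm rho')^2 / (8 * a) \<le> (25*a/128) * (norm L)^2"
    using a by (simp add: power_mult_distrib divide_simps power2_eq_square mult_ac)
  also have "\<dots> \<le> (3*a/4) * (norm L)^2" using a by (intro mult_right_mono) auto
  finally show ?thesis using lb by linarith
qed

lemma qfi_lb:
  fixes Y rho' :: "complex^'n^'n" and e a :: real
  assumes Km: "Km > 0" "\<forall>(A::complex^'n^'n) (B::complex^'n^'n). norm (A ** B) \<le> Km * norm A * norm B"
    and Kt: "\<forall>A::complex^'n^'n. cmod (trace A) \<le> Kt * norm A" "Kt > 0"
    and a: "a > 0" and e: "e \<ge> 0"
    and small1: "e * Kt * Km^2 * norm Y \<le> a / 4" and small2: "e * Km * norm Y \<le> a / 4"
    and hY: "hermitian_mat Y" and hr: "hermitian_mat rho'"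
  shows "(norm rho')^2 / (8 * a) \<le> qfi (smult_mat a (mat 1) + smult_mat e Y) rho'"
proof -
  define rho where "rho = smult_mat a (mat 1) + smult_mat e Y"
  define Phi where "Phi L = rho ** L + L ** rho" for L
  have hrho: "hermitian_mat rho"
    using hY by (simp add: rho_def hermitian_mat_def adj_add adj_smult)
  have lin: "linear Phi"
    unfolding linear_iff Phi_def
    by (simp add: matrix_add_ldistrib mm_add_left flip: smult_of_real)
       (simp add: smult_mult_left smult_mult_right smult_add)
  have Phi_diff: "Phi (x - y) = Phi x - Phi y" for x y
    by (simp add: Phi_def mm_diff_right mm_diff_left)
  have zero: "L = 0" if "Phi L = 0" for L
  proof -
    have t1: "cmod (trace (adjoint_mat L ** Y ** L)) \<le> Kt * Km^2 * norm L * norm Y * norm L"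
      using tb3[OF Km Kt] norm_adj[of L] by metis
    have t2: "cmod (trace (adjoint_mat L ** L ** Y)) \<le> Kt * Km^2 * norm L * norm L * norm Y"
      using tb3[OF Km Kt] norm_adj[of L] by metis
    have "trace (adjoint_mat L ** Phi L) = of_real (2 * a * (norm L)^2)
        + e * (trace (adjoint_mat L ** Y ** L) + trace (adjoint_mat L ** L ** Y))"
      unfolding Phi_def rho_def rho_mult
      by (simp add: matrix_add_ldistrib smult_mult_right trace_add trace_smult trace_adj_self matrix_mul_assoc)
    moreover have "trace (adjoint_mat L ** Phi L) = 0" unfolding that by (simp add: trace_def)
    ultimately have z: "of_real (2 * a * (norm L)^2)
        + e * (trace (adjoint_mat L ** Y ** L) + trace (adjoint_mat L ** L ** Y)) = 0" by (rule subst)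
    have eq0: "2 * a * (norm L)^2 + e * Re (trace (adjoint_mat L ** Y ** L) + trace (adjoint_mat L ** L ** Y)) = 0"
      using arg_cong[OF z, of Re] by (simp only: plus_complex.sel times_complex.sel Re_complex_of_real
          Im_complex_of_real zero_complex.sel mult_zero_left diff_zero)
    have "\<bar>Re (trace (adjoint_mat L ** Y ** L) + trace (adjoint_mat L ** L ** Y))\<bar>
        \<le> cmod (trace (adjoint_mat L ** Y ** L)) + cmod (trace (adjoint_mat L ** L ** Y))"
      by (metis abs_Re_le_cmod norm_triangle_ineq order_trans)
    also have "\<dots> \<le> 2 * (Kt * Km^2 * norm Y) * (norm L)^2"
      using t1 t2 by (simp add: power2_eq_square mult_ac)
    finally have "e * \<bar>Re (trace (adjoint_mat L ** Y ** L) + trace (adjoint_mat L ** L ** Y))\<bar>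
        \<le> e * (2 * (Kt * Km^2 * norm Y) * (norm L)^2)" using e by (rule mult_left_mono)
    also have "\<dots> = 2 * (e * Kt * Km^2 * norm Y) * (norm L)^2" by (simp add: mult_ac)
    also have "\<dots> \<le> 2 * (a/4) * (norm L)^2" using small1 by (intro mult_right_mono mult_left_mono) auto
    finally have X: "e * \<bar>Re (trace (adjoint_mat L ** Y ** L) + trace (adjoint_mat L ** L ** Y))\<bar> \<le> 2 * (a/4) * (norm L)^2" .
    have "e * (- \<bar>Re (trace (adjoint_mat L ** Y ** L) + trace (adjoint_mat L ** L ** Y))\<bar>)
       \<le> e * Re (trace (adjoint_mat L ** Y ** L) + trace (adjoint_mat L ** L ** Y))"
      using e by (intro mult_left_mono) auto
    then have "(3 * a / 2) * (norm L)^2 \<le> 0"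
      using eq0 X by linarith
    then have "(norm L)^2 \<le> 0" using a by (simp add: mult_le_0_iff)
    then show ?thesis by simp
  qed
  have "inj Phi"
  proof (rule injI)
    fix x y assume "Phi x = Phi y"
    then have "Phi (x - y) = 0" by (simp add: Phi_diff)
    then have "x - y = 0" by (rule zero)
    then show "x = y" by simp
  qed
  then have "surj Phi" using linear_inj_imp_surj[OF lin] by simp
  then obtain L0 where L0: "Phi L0 = 2 *\<^sub>R rho'" by (metis surjD)
  have adjPhi: "Phi (adjoint_mat X) = adjoint_mat (Phi X)" for X
    using hrho by (simp add: Phi_def adj_add adj_mult hermitian_mat_def add.commute)
  define L where "L = smult_mat (1/2) (L0 + adjoint_mat L0)"
  have hL: "hermitian_mat L" unfolding L_def hermitian_mat_def
    by (simp add: adj_smult adj_add add.commute)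
  have "Phi L = smult_mat (1/2) (Phi L0 + Phi (adjoint_mat L0))"
    by (simp add: L_def Phi_def smult_mult_left smult_mult_right smult_add matrix_add_ldistrib mm_add_left algebra_simps)
  also have "\<dots> = 2 *\<^sub>R rho'"
    using hr by (simp add: adjPhi L0 adj_scaleR hermitian_mat_def) (simp add: vec_eq_iff scaleR_conv_of_real)
  finally have PL: "Phi L = 2 *\<^sub>R rho'" .
  let ?P = "\<lambda>L. hermitian_mat L \<and> 2 *\<^sub>R rho' = rho ** L + L ** rho"
  have "?P L" using hL PL by (simp add: Phi_def)
  then have PS: "?P (SOME L. ?P L)" by (rule someI)
  have "qfi rho rho' = Re (trace (rho ** (SOME L. ?P L) ** (SOME L. ?P L)))"
    by (simp add: qfi_def Let_def)
  moreover have "(norm rho')^2 / (8 * a) \<le> Re (trace (rho ** (SOME L. ?P L) ** (SOME L. ?P L)))"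
    unfolding rho_def
    by (rule qfi_bound_L[OF Km Kt _ a e small1 small2]) (use PS in \<open>simp_all add: rho_def\<close>)
  ultimately show ?thesis by (simp add: rho_def)
qed

lemma trace_adj: "trace (adjoint_mat A) = cnj (trace A)"
  by (simp add: trace_def)

lemma Mnorm:
  fixes R :: "complex^'n^'n"
  assumes "trace (R ** R) = 0"
  shows "(norm (smult_mat w R + smult_mat (cnj w) (adjoint_mat R)))^2 = 2 * (cmod w)^2 * (norm R)^2"
proof -
  define M where "M = smult_mat w R + smult_mat (cnj w) (adjoint_mat R)"
  have "trace (adjoint_mat M ** M) = (cnj w * w) * trace (adjoint_mat R ** R)
      + (cnj w * cnj w) * trace (adjoint_mat R ** adjoint_mat R) + (w * w) * trace (R ** R)
      + (w * cnj w) * trace (R ** adjoint_mat R)"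
    by (simp add: M_def adj_add adj_smult matrix_add_ldistrib mm_add_left smult_mult_left
        smult_mult_right trace_add trace_smult algebra_simps)
  also have "trace (adjoint_mat R ** adjoint_mat R) = 0"
    using assms by (simp add: trace_adj flip: adj_mult)
  also have "trace (R ** adjoint_mat R) = trace (adjoint_mat R ** R)"
    by (rule trace_mul_sym)
  finally have "trace (adjoint_mat M ** M) = 2 * (w * cnj w) * of_real ((norm R)^2)"
    using assms by (simp add: trace_adj_self algebra_simps)
  also have "\<dots> = of_real (2 * (cmod w)^2 * (norm R)^2)"
    by (simp flip: complex_norm_square)
  finally have "of_real ((norm M)^2) = (of_real (2 * (cmod w)^2 * (norm R)^2) :: complex)"
    by (simp add: trace_adj_self)
  then show ?thesis unfolding M_def using of_real_eq_iff by blast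
qed

lemma herm_real_form: "hermitian_mat H \<Longrightarrow> Im (cdot x (H *v x)) = 0"
proof -
  assume h: "hermitian_mat H"
  have "cnj (cdot x (H *v x)) = cdot (H *v x) x"
    by (simp add: cdot_def mult.commute)
  also have "\<dots> = cdot x (H *v x)"
    using cdot_adj[of x H x] h by (simp add: hermitian_mat_def)
  finally show ?thesis using Reals_cnj_iff complex_is_Real_iff by metis
qed

lemma smult_mv: "smult_mat c A *v x = c *s (A *v (x::complex^'n))"
  by (simp add: vec_eq_iff matrix_vector_mult_def sum_distrib_left mult_ac)

lemma trace_bl: "bounded_linear (trace :: complex^'n^'n \<Rightarrow> complex)"
  using trace_linear linear_conv_bounded_linear by blast

lemma small_prod:
  fixes e X y Q Yb a :: real
  assumes "0 \<le> X" "X \<le> Q" "0 \<le> y" "y \<le> Yb" "Q > 0" "Yb > 0" "a > 0" "e = a / (4 * Q * Yb)"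
  shows "e * X * y \<le> a / 4"
proof -
  have e0: "e \<ge> 0" using assms by simp
  have "e * X * y \<le> e * Q * Yb"
    using assms e0 by (intro mult_mono) (auto intro: mult_left_mono)
  also have "\<dots> = a / 4" using assms by simp
  finally show ?thesis .
qed

lemma lb_div:
  fixes q x e a b :: real and N :: nat
  assumes "b > 0" "N > 0" "x \<ge> real N * b / 2" "(e * x)^2 / (8 * a) \<le> q" "a > 0" "e > 0"
  shows "e^2 * b^2 / (32 * a) \<le> q / (real N)^2"
proof -
  have "e * (real N * b / 2) \<le> e * x" using assms by (intro mult_left_mono) auto
  moreover have "0 \<le> e * (real N * b / 2)" using assms by simp
  ultimately have "(e * (real N * b / 2))^2 \<le> (e * x)^2" by (rule power_mono)
  then have "(e * (real N * b / 2))^2 / (8 * a) \<le> q"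
    using assms by (meson divide_right_mono order_trans zero_le_numeral mult_nonneg_nonneg less_imp_le)
  then have "e^2 * b^2 / (32 * a) * (real N)^2 \<le> q"
    by (simp add: power_mult_distrib field_simps)
  then show ?thesis using assms by (simp add: le_divide_eq)
qed

locale chsetup =
  fixes K :: "nat \<Rightarrow> real \<Rightarrow> complex^'n^'n" and m :: nat and \<theta>0 :: real
    and lam :: "real \<Rightarrow> complex" and lam' :: "real \<Rightarrow> complex"
    and R :: "real \<Rightarrow> complex^'n^'n" and R' :: "real \<Rightarrow> complex^'n^'n"
  assumes unital: "\<forall>\<theta>. unital_channel K m \<theta>"
    and K_diff: "\<forall>i<m. \<forall>\<theta>. K i differentiable (at \<theta>)"
    and eig: "\<forall>\<theta>. liouville K m \<theta> *v vec_mat (R \<theta>) = lam \<theta> *s vec_mat (R \<theta>) \<and> R \<theta> \<noteq> 0"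
    and peripheral: "\<forall>\<theta>. norm (lam \<theta>) = 1"
    and lam_d: "\<forall>\<theta>. (lam has_vector_derivative lam' \<theta>) (at \<theta>)"
    and R_d: "\<forall>\<theta>. (R has_vector_derivative R' \<theta>) (at \<theta>)"
    and lam_dot: "lam' \<theta>0 \<noteq> 0"
begin

definition "K' i = vector_derivative (K i) (at \<theta>0)"
definition "l0 = lam \<theta>0"
definition "mu = lam' \<theta>0 / l0"
definition "R0 = R \<theta>0"
definition "Rd = R' \<theta>0"
definition "D N = smult_mat (of_nat N * l0^N * mu) R0 + smult_mat (l0^N) Rd - (apply_channel K m \<theta>0 ^^ N) Rd"

lemma l0_norm: "cmod l0 = 1" using peripheral l0_def by simp
lemma l0_nz: "l0 \<noteq> 0" using l0_norm by auto

lemma Kd: "i < m \<Longrightarrow> (K i has_vector_derivative K' i) (at \<theta>0)"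
  unfolding K'_def using K_diff vector_derivative_works by blast

lemma eigP: "apply_channel K m t (R t) = smult_mat (lam t) (R t)"
  using eig eig_P by blast

lemma Pd_R0: "Pd K K' m \<theta>0 R0 = smult_mat (lam' \<theta>0) R0 + smult_mat l0 Rd - apply_channel K m \<theta>0 Rd"
proof -
  have d1: "((\<lambda>s. apply_channel K m s (R s)) has_vector_derivative
           (apply_channel K m \<theta>0 Rd + Pd K K' m \<theta>0 R0)) (at \<theta>0)"
    using P_deriv[of m K K' \<theta>0 R "R' \<theta>0"] Kd R_d by (simp add: Rd_def R0_def)
  have d2: "((\<lambda>s. smult_mat (lam s) (R s)) has_vector_derivative
           (smult_mat l0 Rd + smult_mat (lam' \<theta>0) R0)) (at \<theta>0)"
    using smult_deriv[of lam "lam' \<theta>0" \<theta>0 R "R' \<theta>0"] lam_d R_d by (simp add: Rd_def R0_def l0_def)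
  have "apply_channel K m \<theta>0 Rd + Pd K K' m \<theta>0 R0 = smult_mat l0 Rd + smult_mat (lam' \<theta>0) R0"
    using vector_derivative_unique_at[OF d1] d2 by (simp add: eigP)
  then show ?thesis by (simp add: algebra_simps)
qed

lemma FN_val: "(apply_channel K m \<theta>0 ^^ N) R0 = smult_mat (l0^N) R0"
proof (induction N)
  case 0 then show ?case by simp
next
  case (Suc N)
  have "apply_channel K m \<theta>0 R0 = smult_mat l0 R0" using eigP l0_def R0_def by simp
  with Suc show ?case by (simp add: P_smult mult.commute)
qed

lemma FN_deriv: "((\<lambda>t. (apply_channel K m t ^^ N) R0) has_vector_derivative D N) (at \<theta>0)"
proof (induction N)
  case 0 then show ?case by (simp add: D_def)
next
  case (Suc N)
  have "((\<lambda>t. apply_channel K m t ((apply_channel K m t ^^ N) R0)) has_vector_derivative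
      (apply_channel K m \<theta>0 (D N) + Pd K K' m \<theta>0 ((apply_channel K m \<theta>0 ^^ N) R0))) (at \<theta>0)"
    using P_deriv[OF _ Suc] Kd by blast
  moreover have "apply_channel K m \<theta>0 (D N) + Pd K K' m \<theta>0 ((apply_channel K m \<theta>0 ^^ N) R0) = D (Suc N)"
  proof -
    have lm: "lam' \<theta>0 = mu * l0" using l0_nz by (simp add: mu_def)
    have "apply_channel K m \<theta>0 (D N) + Pd K K' m \<theta>0 ((apply_channel K m \<theta>0 ^^ N) R0)
      = smult_mat (of_nat N * l0^N * mu) (smult_mat l0 R0) + smult_mat (l0^N) (apply_channel K m \<theta>0 Rd)
         - (apply_channel K m \<theta>0 ^^ Suc N) Rd
        + smult_mat (l0^N) (smult_mat (lam' \<theta>0) R0 + smult_mat l0 Rd - apply_channel K m \<theta>0 Rd)"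
      using eigP[of \<theta>0]
      by (simp add: D_def P_add P_diff P_smult FN_val Pd_smult Pd_R0 flip: R0_def l0_def)
    also have "\<dots> = D (Suc N)"
      unfolding D_def lm by (simp add: vec_eq_iff algebra_simps)
    finally show ?thesis .
  qed
  ultimately show ?case by simp
qed

definition "dd = real CARD('n)"
definition "tau = trace (R0 + adjoint_mat R0)"
definition "Y0 = R0 + adjoint_mat R0 - smult_mat (tau / of_nat CARD('n)) (mat 1)"
definition "rho0 e = smult_mat (of_real (1/dd)) (mat 1) + smult_mat (of_real e) Y0"
definition "YN N = (apply_channel K m \<theta>0 ^^ N) Y0"

lemma dd_pos: "dd > 0" by (simp add: dd_def)

lemma rhoN: "(apply_channel K m t ^^ N) (rho0 e) = smult_mat (of_real (1/dd)) (mat 1)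
   + smult_mat (of_real e) ((apply_channel K m t ^^ N) R0 + adjoint_mat ((apply_channel K m t ^^ N) R0)
        - smult_mat (tau / of_nat CARD('n)) (mat 1))"
  using unital by (simp add: rho0_def Y0_def Pn_add Pn_diff Pn_smult Pn_adj Pn_unital)

lemma rhoN0: "(apply_channel K m \<theta>0 ^^ N) (rho0 e) = smult_mat (of_real (1/dd)) (mat 1) + smult_mat (of_real e) (YN N)"
  using unital by (simp add: rho0_def YN_def Pn_add Pn_smult Pn_unital)

lemma rhoN_deriv: "((\<lambda>t. (apply_channel K m t ^^ N) (rho0 e)) has_vector_derivative
     smult_mat (of_real e) (D N + adjoint_mat (D N))) (at \<theta>0)"
proof -
  have "((\<lambda>t. smult_mat (of_real (1/dd)) (mat 1)
   + smult_mat (of_real e) ((apply_channel K m t ^^ N) R0 + adjoint_mat ((apply_channel K m t ^^ N) R0)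
        - smult_mat (tau / of_nat CARD('n)) (mat 1))) has_vector_derivative
      0 + (smult_mat (of_real e) (D N + adjoint_mat (D N) - 0) + smult_mat 0 ((apply_channel K m \<theta>0 ^^ N) R0 + adjoint_mat ((apply_channel K m \<theta>0 ^^ N) R0)
        - smult_mat (tau / of_nat CARD('n)) (mat 1)))) (at \<theta>0)"
    by (intro has_vector_derivative_add has_vector_derivative_const smult_deriv has_vector_derivative_diff
        adj_deriv FN_deriv)
  then show ?thesis by (simp add: rhoN)
qed

lemma herm_Y0: "hermitian_mat Y0"
proof -
  have "cnj tau = tau" by (simp add: tau_def trace_def adj_add add.commute flip: sum.distrib)
  then show ?thesis by (simp add: hermitian_mat_def Y0_def adj_diff adj_add adj_smult add.commute)
qed

lemma herm_YN: "hermitian_mat (YN N)"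
  using herm_Y0 by (simp add: hermitian_mat_def YN_def flip: Pn_adj)

lemma YN_bound: "\<exists>CY. \<forall>N. norm (YN N) \<le> CY"
  unfolding YN_def using Pn_bounded unital by blast

lemma B_bound: "\<exists>CB. \<forall>N. norm (smult_mat (l0^N) Rd - (apply_channel K m \<theta>0 ^^ N) Rd) \<le> CB"
proof -
  obtain C where C: "\<forall>N. norm ((apply_channel K m \<theta>0 ^^ N) Rd) \<le> C" using Pn_bounded unital by blast
  show ?thesis
  proof (intro exI allI)
    fix N
    have "norm (smult_mat (l0^N) Rd - (apply_channel K m \<theta>0 ^^ N) Rd) \<le> norm (smult_mat (l0^N) Rd) + C"
      using C norm_triangle_ineq4 order_trans add_left_mono by metis
    also have "\<dots> = norm Rd + C" using l0_norm by (simp add: norm_smult norm_power)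
    finally show "norm (smult_mat (l0^N) Rd - (apply_channel K m \<theta>0 ^^ N) Rd) \<le> norm Rd + C" .
  qed
qed

lemma D_split: "D N = smult_mat (of_nat N * l0^N * mu) R0 + (smult_mat (l0^N) Rd - (apply_channel K m \<theta>0 ^^ N) Rd)"
  by (simp add: D_def)

lemma case2_bound: assumes "trace (R0 ** R0) = 0"
  shows "\<exists>c. \<forall>N. real N * cmod mu * norm R0 - c \<le> norm (D N + adjoint_mat (D N))"
proof -
  obtain CB where CB: "\<forall>N. norm (smult_mat (l0^N) Rd - (apply_channel K m \<theta>0 ^^ N) Rd) \<le> CB"
    using B_bound by blast
  show ?thesis
  proof (intro exI allI)
    fix N
    define w where "w = of_nat N * l0^N * mu"
    define B where "B = smult_mat (l0^N) Rd - (apply_channel K m \<theta>0 ^^ N) Rd"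
    define M where "M = smult_mat w R0 + smult_mat (cnj w) (adjoint_mat R0)"
    have cw: "cmod w = real N * cmod mu" using l0_norm by (simp add: w_def norm_mult norm_power)
    have "(cmod w * norm R0)^2 \<le> (norm M)^2"
      unfolding M_def Mnorm[OF assms] by (simp add: power_mult_distrib)
    then have nM: "cmod w * norm R0 \<le> norm M"
      by (rule power2_le_imp_le) simp
    have DD: "D N + adjoint_mat (D N) = M + (B + adjoint_mat B)"
      by (simp add: D_split M_def B_def w_def adj_add adj_diff adj_smult algebra_simps)
    have "norm (B + adjoint_mat B) \<le> 2 * CB"
    proof -
      have "norm B \<le> CB" using CB B_def by blast
      then show ?thesis using norm_triangle_ineq[of B "adjoint_mat B"] norm_adj[of B] by simp
    qed
    then have "norm M - 2 * CB \<le> norm (D N + adjoint_mat (D N))"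
      unfolding DD using norm_diff_ineq[of M "B + adjoint_mat B"] by linarith
    then show "real N * cmod mu * norm R0 - 2 * CB \<le> norm (D N + adjoint_mat (D N))"
      using nM cw by simp
  qed
qed

lemma smult_cancel: "c \<noteq> 0 \<Longrightarrow> smult_mat c A = smult_mat c B \<Longrightarrow> A = B"
  by (simp add: vec_eq_iff)

lemma case1_false: assumes R0c: "R0 = smult_mat c H" and hH: "hermitian_mat H" shows False
proof -
  have R0nz: "R0 \<noteq> 0" using eig by (simp add: R0_def)
  have cnz: "c \<noteq> 0" and Hnz: "H \<noteq> 0" using R0nz R0c by auto
  have "smult_mat c (apply_channel K m \<theta>0 H) = smult_mat c (smult_mat l0 H)"
    using eigP[of \<theta>0] R0c by (simp add: P_smult mult.commute flip: R0_def l0_def)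
  then have PH: "apply_channel K m \<theta>0 H = smult_mat l0 H" using cnz by (rule smult_cancel[rotated])
  have "hermitian_mat (smult_mat l0 H)" using hermitian_P[OF hH] PH by metis
  then have ee: "smult_mat (cnj l0) H = smult_mat l0 H" using hH by (simp add: hermitian_mat_def adj_smult)
  obtain i j where Hij: "H $ i $ j \<noteq> 0" using Hnz by (metis vec_eq_iff zero_index)
  have "cnj l0 * H $ i $ j = l0 * H $ i $ j" using ee by (metis smult_nth)
  then have cl: "cnj l0 = l0" using Hij by simp
  then have Iml0: "Im l0 = 0" by (metis Reals_cnj_iff complex_is_Real_iff)
  define r where "r = Re l0"
  have l0r: "l0 = of_real r" using Iml0 r_def complex_eq_iff by auto
  have r1: "\<bar>r\<bar> = 1" using l0_norm l0r by simp
  have const: "lam t * cnj (lam t) = 1" for t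
    using peripheral by (simp flip: complex_norm_square)
  have "((\<lambda>t. lam t * cnj (lam t)) has_vector_derivative (lam \<theta>0 * cnj (lam' \<theta>0) + lam' \<theta>0 * cnj (lam \<theta>0))) (at \<theta>0)"
    using lam_d by (intro has_vector_derivative_mult has_vector_derivative_cnj) auto
  moreover have "((\<lambda>t. lam t * cnj (lam t)) has_vector_derivative 0) (at \<theta>0)" using const by simp
  ultimately have "l0 * cnj (lam' \<theta>0) + lam' \<theta>0 * cnj l0 = 0"
    using vector_derivative_unique_at l0_def by metis
  then have "l0 * (cnj (lam' \<theta>0) + lam' \<theta>0) = 0" using cl by (simp add: algebra_simps)
  then have "cnj (lam' \<theta>0) + lam' \<theta>0 = 0" using l0_nz by simp
  then have Relam: "Re (lam' \<theta>0) = 0" by (metis complex_add_cnj mult_eq_0_iff of_real_eq_0_iff zero_neq_numeral add.commute)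
  have Remu: "Re mu = 0" using Relam by (simp add: mu_def l0r)
  have munz: "mu \<noteq> 0" using lam_dot l0_nz by (simp add: mu_def)
  have cmu: "cmod mu = \<bar>Im mu\<bar>" using Remu by (rule cmod_eq_Im)
  obtain CB where CB: "\<forall>N. norm (smult_mat (l0^N) Rd - (apply_channel K m \<theta>0 ^^ N) Rd) \<le> CB"
    using B_bound by blast
  have key: "2 * real N * cmod mu * norm H \<le> 2 * CB / cmod c" for N
  proof -
    define G where "G t = (apply_channel K m t ^^ N) H" for t
    define B where "B = smult_mat (l0^N) Rd - (apply_channel K m \<theta>0 ^^ N) Rd"
    define w where "w = of_nat N * l0^N * mu"
    define Z where "Z = smult_mat (1/c) B"
    have Gf: "G = (\<lambda>t. smult_mat (1/c) ((apply_channel K m t ^^ N) R0))"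
      using cnz by (simp add: G_def R0c Pn_smult fun_eq_iff)
    have "((\<lambda>t. smult_mat (1/c) ((apply_channel K m t ^^ N) R0)) has_vector_derivative
        smult_mat (1/c) (D N) + smult_mat 0 ((apply_channel K m \<theta>0 ^^ N) R0)) (at \<theta>0)"
      by (intro smult_deriv has_vector_derivative_const FN_deriv)
    then have Gd: "(G has_vector_derivative smult_mat (1/c) (D N)) (at \<theta>0)" by (simp add: Gf)
    have "(\<lambda>t. adjoint_mat (G t)) = G"
      using hH by (simp add: G_def fun_eq_iff hermitian_mat_def flip: Pn_adj)
    then have "(G has_vector_derivative adjoint_mat (smult_mat (1/c) (D N))) (at \<theta>0)"
      using adj_deriv[OF Gd] by simp
    then have EE: "adjoint_mat (smult_mat (1/c) (D N)) = smult_mat (1/c) (D N)"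
      using vector_derivative_unique_at Gd by metis
    have E: "smult_mat (1/c) (D N) = smult_mat w H + Z"
      using cnz by (simp add: D_split R0c Z_def B_def w_def smult_add)
    have "smult_mat (cnj w) H + adjoint_mat Z = smult_mat w H + Z"
      using EE unfolding E using hH by (simp add: adj_add adj_smult hermitian_mat_def)
    then have "smult_mat (w - cnj w) H = adjoint_mat Z - Z"
      by (simp add: vec_eq_iff algebra_simps)
    then have "cmod (w - cnj w) * norm H = norm (adjoint_mat Z - Z)" by (metis norm_smult)
    also have "\<dots> \<le> 2 * norm Z" using norm_triangle_ineq4[of "adjoint_mat Z" Z] norm_adj[of Z] by simp
    also have "\<dots> = 2 * (norm B / cmod c)" by (simp add: Z_def norm_smult norm_divide)
    also have "\<dots> \<le> 2 * (CB / cmod c)" using CB B_def by (auto intro!: divide_right_mono)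
    finally have A: "cmod (w - cnj w) * norm H \<le> 2 * CB / cmod c" by simp
    have "w - cnj w = of_real (real N * r^N) * (mu - cnj mu)"
      by (simp add: w_def l0r algebra_simps)
    then have "cmod (w - cnj w) = real N * 2 * cmod mu"
      using r1 cmu by (simp add: complex_diff_cnj norm_mult abs_mult power_abs norm_power)
    then show ?thesis using A by (simp add: mult_ac)
  qed
  have Hp: "norm H > 0" using Hnz by simp
  have cp: "cmod c > 0" using cnz by simp
  have mp: "cmod mu > 0" using munz by simp
  obtain N :: nat where N: "real N > CB / (cmod c * cmod mu * norm H)"
    using reals_Archimedean2 by blast
  then have "real N * (cmod c * cmod mu * norm H) > CB"
    using Hp cp mp by (simp add: divide_less_eq mult_pos_pos)
  moreover have "2 * real N * cmod mu * norm H * cmod c \<le> 2 * CB"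
    using key[of N] cp by (simp add: le_divide_eq)
  ultimately show False by (simp add: mult_ac)
qed

lemma final:
  assumes cond: "(\<exists>A c H. (R \<longlongrightarrow> A) (at \<theta>0) \<and> hermitian_mat H \<and> A = smult_mat c H)
             \<or> ((\<lambda>\<theta>. trace (R \<theta> ** R \<theta>)) \<longlongrightarrow> 0) (at \<theta>0)"
  shows "\<exists>\<rho>0. density_matrix \<rho>0 \<and>
           liminf (\<lambda>N. ereal (qfi_family (\<lambda>\<theta>. (apply_channel K m \<theta> ^^ N) \<rho>0) \<theta>0 / (real N)^2)) > 0"
proof -
  have Rc: "(R \<longlongrightarrow> R0) (at \<theta>0)"
    using has_vector_derivative_continuous[OF R_d[rule_format, of \<theta>0]] by (simp add: continuous_at R0_def)
  have tr0: "trace (R0 ** R0) = 0"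
  proof (cases "\<exists>A c H. (R \<longlongrightarrow> A) (at \<theta>0) \<and> hermitian_mat H \<and> A = smult_mat c H")
    case True
    then obtain A c H where "(R \<longlongrightarrow> A) (at \<theta>0)" "hermitian_mat H" "A = smult_mat c H" by blast
    moreover have "A = R0" using tendsto_unique[OF at_neq_bot \<open>(R \<longlongrightarrow> A) (at \<theta>0)\<close> Rc] .
    ultimately have False using case1_false[of c H] by simp
    then show ?thesis ..
  next
    case False
    then have lim: "((\<lambda>\<theta>. trace (R \<theta> ** R \<theta>)) \<longlongrightarrow> 0) (at \<theta>0)" using cond by blast
    have "((\<lambda>t. R t ** R t) has_vector_derivative (R \<theta>0 ** R' \<theta>0 + R' \<theta>0 ** R \<theta>0)) (at \<theta>0)"
      using bounded_bilinear.has_vector_derivative[OF mm_bounded_bilinear R_d[rule_format] R_d[rule_format]] by simp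
    from bounded_linear.has_vector_derivative[OF trace_bl this]
    have "continuous (at \<theta>0) (\<lambda>t. trace (R t ** R t))" by (rule has_vector_derivative_continuous)
    then have "((\<lambda>\<theta>. trace (R \<theta> ** R \<theta>)) \<longlongrightarrow> trace (R0 ** R0)) (at \<theta>0)"
      by (simp add: continuous_at R0_def)
    then show ?thesis using tendsto_unique[OF at_neq_bot _ lim] by metis
  qed
  obtain Km Kt where Km: "Km > 0" "\<forall>(A::complex^'n^'n) (B::complex^'n^'n). norm (A ** B) \<le> Km * norm A * norm B"
    and Kt: "Kt > 0" "\<forall>A::complex^'n^'n. cmod (trace A) \<le> Kt * norm A"
    using kconsts by blast
  obtain Kc where Kc: "Kc > 0" "\<forall>(x::complex^'n) (y::complex^'n). cmod (cdot x y) \<le> Kc * norm x * norm y"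
    using cdot_bound by blast
  obtain Kv where Kv: "Kv > 0" "\<forall>(A::complex^'n^'n) (x::complex^'n). norm (A *v x) \<le> Kv * norm A * norm x"
    using mv_bound by blast
  obtain CY where CY: "\<forall>N. norm (YN N) \<le> CY" using YN_bound by blast
  obtain c2 where c2: "\<forall>N. real N * cmod mu * norm R0 - c2 \<le> norm (D N + adjoint_mat (D N))"
    using case2_bound[OF tr0] by blast
  define a where "a = 1 / dd"
  have a: "a > 0" using dd_pos by (simp add: a_def)
  define Q where "Q = Kt * Km^2 + Km + Kc * Kv"
  define Yb where "Yb = \<bar>CY\<bar> + 1"
  have Q: "Q > 0" using Km Kt Kc Kv by (simp add: Q_def add_pos_pos)
  have Yb: "Yb > 0" by (simp add: Yb_def add_nonneg_pos)
  define e where "e = a / (4 * Q * Yb)"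
  have e: "e > 0" using a Q Yb by (simp add: e_def)
  have nY: "0 \<le> norm (YN N)" "norm (YN N) \<le> Yb" for N using CY[rule_format, of N] by (auto simp: Yb_def)
  have s1: "e * (Kt * Km^2) * norm (YN N) \<le> a / 4" for N
    by (rule small_prod[OF _ _ nY(1) nY(2) Q Yb a e_def]) (use Km Kt Kc Kv in \<open>auto simp: Q_def\<close>)
  have s2: "e * Km * norm (YN N) \<le> a / 4" for N
    by (rule small_prod[OF _ _ nY(1) nY(2) Q Yb a e_def]) (use Km Kt Kc Kv in \<open>auto simp: Q_def\<close>)
  have s3: "e * (Kc * Kv) * norm (YN N) \<le> a / 4" for N
    by (rule small_prod[OF _ _ nY(1) nY(2) Q Yb a e_def]) (use Km Kt Kc Kv in \<open>auto simp: Q_def\<close>)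
  have Y0N: "YN 0 = Y0" by (simp add: YN_def)
  have dens: "density_matrix (rho0 e)"
  proof -
    have herm: "hermitian_mat (rho0 e)"
      using herm_Y0 by (simp add: rho0_def hermitian_mat_def adj_add adj_smult)
    have q: "(\<Sum>i\<in>UNIV. cnj (x $ i) * ((rho0 e *v x) $ i)) = cdot x (rho0 e *v x)" for x
      by (simp add: cdot_def)
    have form: "Im (cdot x (rho0 e *v x)) = 0 \<and> Re (cdot x (rho0 e *v x)) \<ge> 0" for x
    proof
      show "Im (cdot x (rho0 e *v x)) = 0" using herm by (rule herm_real_form)
      have ce: "cdot x (rho0 e *v x) = of_real (a * (norm x)^2) + of_real e * cdot x (Y0 *v x)"
        by (simp add: rho0_def matrix_vector_mult_add_rdistrib smult_mv cdot_add_right cdot_smult_right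
            cdot_self a_def)
      have "cmod (cdot x (Y0 *v x)) \<le> Kc * norm x * norm (Y0 *v x)" using Kc by blast
      also have "\<dots> \<le> Kc * norm x * (Kv * norm Y0 * norm x)"
        using Kc Kv by (intro mult_left_mono) auto
      finally have "cmod (cdot x (Y0 *v x)) \<le> (Kc * Kv) * norm Y0 * (norm x)^2"
        by (simp add: power2_eq_square mult_ac)
      then have "e * cmod (cdot x (Y0 *v x)) \<le> e * ((Kc * Kv) * norm Y0 * (norm x)^2)"
        using e by (intro mult_left_mono) auto
      also have "\<dots> = (e * (Kc * Kv) * norm (YN 0)) * (norm x)^2" by (simp add: Y0N mult_ac)
      also have "\<dots> \<le> (a/4) * (norm x)^2" using s3 by (intro mult_right_mono) auto
      finally have b: "e * cmod (cdot x (Y0 *v x)) \<le> (a/4) * (norm x)^2" .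
      have "\<bar>Re (cdot x (Y0 *v x))\<bar> \<le> cmod (cdot x (Y0 *v x))" by (rule abs_Re_le_cmod)
      then have "- cmod (cdot x (Y0 *v x)) \<le> Re (cdot x (Y0 *v x))" by linarith
      then have "e * (- cmod (cdot x (Y0 *v x))) \<le> e * Re (cdot x (Y0 *v x))"
        using e by (intro mult_left_mono) auto
      then have "- (e * cmod (cdot x (Y0 *v x))) \<le> e * Re (cdot x (Y0 *v x))" by simp
      moreover have "0 \<le> a * (norm x)^2" using a by simp
      ultimately show "Re (cdot x (rho0 e *v x)) \<ge> 0"
        unfolding ce using b by simp
    qed
    have tr: "trace (rho0 e) = 1"
    proof -
      have "trace Y0 = 0" by (simp add: Y0_def trace_add trace_sub trace_smult trace_I tau_def)
      then show ?thesis using dd_pos by (simp add: rho0_def trace_add trace_smult trace_I dd_def)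
    qed
    show ?thesis unfolding density_matrix_def psd_mat_def Let_def q using herm form tr by blast
  qed
  define b where "b = cmod mu * norm R0"
  have b: "b > 0"
    using lam_dot l0_nz eig by (simp add: b_def mu_def R0_def)
  define N0 where "N0 = nat \<lceil>2 * \<bar>c2\<bar> / b\<rceil> + 1"
  have ev: "e^2 * b^2 / (32 * a) \<le> qfi_family (\<lambda>\<theta>. (apply_channel K m \<theta> ^^ N) (rho0 e)) \<theta>0 / (real N)^2"
    if N: "N \<ge> N0" for N
  proof -
    have Npos: "N > 0" using N by (simp add: N0_def)
    have "real N \<ge> 2 * \<bar>c2\<bar> / b" using N unfolding N0_def by linarith
    then have "real N * b \<ge> 2 * \<bar>c2\<bar>" using b by (simp add: divide_le_eq)
    then have x: "norm (D N + adjoint_mat (D N)) \<ge> real N * b / 2"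
      using c2[rule_format, of N] by (simp add: b_def mult_ac)
    have fam: "qfi_family (\<lambda>\<theta>. (apply_channel K m \<theta> ^^ N) (rho0 e)) \<theta>0
        = qfi (smult_mat (of_real a) (mat 1) + smult_mat (of_real e) (YN N)) (smult_mat (of_real e) (D N + adjoint_mat (D N)))"
      unfolding qfi_family_def vector_derivative_at[OF rhoN_deriv] rhoN0 a_def ..
    have hr: "hermitian_mat (smult_mat (of_real e) (D N + adjoint_mat (D N)))"
      by (simp add: hermitian_mat_def adj_smult adj_add add.commute)
    have "(norm (smult_mat (of_real e) (D N + adjoint_mat (D N))))^2 / (8 * a)
        \<le> qfi (smult_mat (of_real a) (mat 1) + smult_mat (of_real e) (YN N)) (smult_mat (of_real e) (D N + adjoint_mat (D N)))"
      by (rule qfi_lb[OF Km Kt(2) Kt(1) a _ _ _ herm_YN hr]) (use e s1 s2 in \<open>auto simp: mult_ac\<close>)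
    then have "(e * norm (D N + adjoint_mat (D N)))^2 / (8 * a) \<le> qfi_family (\<lambda>\<theta>. (apply_channel K m \<theta> ^^ N) (rho0 e)) \<theta>0"
      using e by (simp add: fam norm_smult)
    then show ?thesis by (rule lb_div[OF b Npos x _ a e])
  qed
  have L: "ereal (e^2 * b^2 / (32 * a)) \<le> liminf (\<lambda>N. ereal (qfi_family (\<lambda>\<theta>. (apply_channel K m \<theta> ^^ N) (rho0 e)) \<theta>0 / (real N)^2))"
    by (rule Liminf_bounded) (use ev in \<open>auto simp: eventually_sequentially\<close>)
  have P: "(0::ereal) < ereal (e^2 * b^2 / (32 * a))" using e b a by simp
  have "0 < liminf (\<lambda>N. ereal (qfi_family (\<lambda>\<theta>. (apply_channel K m \<theta> ^^ N) (rho0 e)) \<theta>0 / (real N)^2))"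
    by (rule less_le_trans[OF P L])
  then show ?thesis using dens by blast
qed

end

theorem corollary2:
  fixes K :: "nat \<Rightarrow> real \<Rightarrow> complex^'n^'n" and m :: nat and \<theta>0 :: real
    and lam :: "real \<Rightarrow> complex" and lam' :: "real \<Rightarrow> complex"
    and R :: "real \<Rightarrow> complex^'n^'n" and R' :: "real \<Rightarrow> complex^'n^'n"
  assumes TP: "\<forall>\<theta>. trace_preserving K m \<theta>"
    and unital: "\<forall>\<theta>. unital_channel K m \<theta>"
    and K_diff: "\<forall>i<m. \<forall>\<theta>. K i differentiable (at \<theta>)"
    and eig: "\<forall>\<theta>. liouville K m \<theta> *v vec_mat (R \<theta>) = lam \<theta> *s vec_mat (R \<theta>) \<and> R \<theta> \<noteq> 0"
    and peripheral: "\<forall>\<theta>. norm (lam \<theta>) = 1"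
    and lam_C1: "\<forall>\<theta>. (lam has_vector_derivative lam' \<theta>) (at \<theta>)" "continuous_on UNIV lam'"
    and R_C1: "\<forall>\<theta>. (R has_vector_derivative R' \<theta>) (at \<theta>)" "continuous_on UNIV R'"
    and lam_dot: "lam' \<theta>0 \<noteq> 0"
    and cond: "(\<exists>A c H. (R \<longlongrightarrow> A) (at \<theta>0) \<and> hermitian_mat H \<and> A = smult_mat c H)
             \<or> ((\<lambda>\<theta>. trace (R \<theta> ** R \<theta>)) \<longlongrightarrow> 0) (at \<theta>0)"
  shows "\<exists>\<rho>0. density_matrix \<rho>0 \<and>
           liminf (\<lambda>N. ereal (qfi_family (\<lambda>\<theta>. (apply_channel K m \<theta> ^^ N) \<rho>0) \<theta>0 / (real N)^2)) > 0"
  proof -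
  interpret chsetup K m \<theta>0 lam lam' R R'
    using unital K_diff eig peripheral lam_C1(1) R_C1(1) lam_dot by unfold_locales
  show ?thesis using final[OF cond] .
qed

end
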